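(* Under the standing hypotheses ($N\ge2$, $l\ge2$, $\sigma\in\mathfrak S_{N,l}$, $J\in\{1,\dots,N\}^k$ nonperiodic, $f\in\mathrm{BFS}_N(\Lambda)$ is $P(J)$, and $\Lambda(p)$ is defined for each $p\in Q_J$ as below): (a) If $\Lambda_0\subset\Lambda$ is such that $f^{(\sigma)}$ restricts to a branching function system on $\Lambda_0$ and $f^{(\sigma)}|_{\Lambda_0}$ is $P(T)$ for some word $T$, then there is $p\in Q_J$ with $\Lambda_0=\Lambda(p)$. (b) For $p,p'\in Q_J$, $p\sim p'$ if and only if $\Lambda(p)=\Lambda(p')$.
   Context: Branching function systems: for an infinite set $\Lambda$, $f=\{f_i\}_{i=1}^N\in\mathrm{BFS}_N(\Lambda)$ means each $f_i$ is injective on $\Lambda$ and $f_1(\Lambda),\dots,f_N(\Lambda)$ partition $\Lambda$. $f_J=f_{j_1}\circ\cdots\circ f_{j_k}$ for $J=(j_1,\dots,j_k)$, $f_0=\mathrm{id}$. $x\sim y$ iff $f_{J_1}(z)=x$, $f_{J_2}(z)=y$ for some words $J_1,J_2$ (possibly empty) and $z$; $A_f(x)=\{y:x\sim y\}$; $f$ is cyclic if $\Lambda=A_f(x)$ for some $x$. $f$ is $P(J)$ ($J=(j_1,\dots,j_k)$) if $f$ is cyclic and there are distinct $n_1,\dots,n_k$ with $f_{j_1}(n_1)=n_k$, $f_{j_2}(n_2)=n_1,\dots,f_{j_k}(n_k)=n_{k-1}$. Restriction $f|_{\Lambda_0}$ is taken when $f_i(\Lambda_0)\subset\Lambda_0$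 and these images partition $\Lambda_0$. For $\sigma\in\mathfrak S_{N,l}$ (permutations of $\{1,\dots,N\}^l$), $f^{(\sigma)}_i(f_K(n))=f_{\sigma(i,K)}(n)$ for $K\in\{1,\dots,N\}^{l-1}$. $J$ nonperiodic: not an $r$-fold concatenation of a word with $r\ge2$. Semi-Mealy machine by $\sigma$: states $q_K$ ($K\in\{1,\dots,N\}^{l-1}$), inputs $a_i$, outputs $b_i$; with $\sigma^{-1}(K,i)=(y_1,\dots,y_l)$, $\delta(q_K,a_i)=q_{(y_2,\dots,y_l)}$, $\lambda(q_K,a_i)=b_{y_1}$, extended to words by $\delta(q,wa)=\delta(\delta(q,w),a)$, $\lambda(q,wa)=\lambda(q,w)\lambda(\delta(q,w),a)$; $a_J=a_{j_1}\cdots a_{j_k}$. $Q_J=\{q:\delta(q,(a_J)^n)=q$ for some $n\ge1\}$, $q\sim q'$ iff $\delta(q,(a_J)^n)=q'$ for some $n\ge1$, $[q]$ its class. Definition of $\Lambda(p)$: let $n_0$ be the unique point with $f_J(n_0)=n_0$. For $p\in Q_J$ let $r=\#[p]$, $\alpha=rk$, extend $J$ periodically ($j_{k(c-1)+i}=j_i$), set $p_1=p$, $p_i=\delta(p_{i-1},a_{j_{i-1}})$ ($2\le i\le\alpha$), write $p_\alpha=q_{I_\alpha}$, let $m(p)=f_{(I_\alpha,j_\alpha)}(n_0)$ and $\Lambda(p)=A_{f^{(\sigma)}}(m(p))$. *)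

theory Defs
  imports Main
begin

definition words :: "nat \<Rightarrow> nat \<Rightarrow> nat list set" where
  "words N m = {w. length w = m \<and> set w \<subseteq> {1..N}}"

primrec fword :: "(nat \<Rightarrow> 'a \<Rightarrow> 'a) \<Rightarrow> nat list \<Rightarrow> 'a \<Rightarrow> 'a" where
  "fword f [] = id"
| "fword f (j # J) = f j \<circ> fword f J"

definition BFS :: "nat \<Rightarrow> 'a set \<Rightarrow> (nat \<Rightarrow> 'a \<Rightarrow> 'a) \<Rightarrow> bool" where
  "BFS N \<Lambda> f \<longleftrightarrow> infinite \<Lambda>
     \<and> (\<forall>i\<in>{1..N}. inj_on (f i) \<Lambda> \<and> f i ` \<Lambda> \<subseteq> \<Lambda>)
     \<and> (\<forall>i\<in>{1..N}. \<forall>j\<in>{1..N}. i \<noteq> j \<longrightarrow> f i ` \<Lambda> \<inter> f j ` \<Lambda> = {})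
     \<and> (\<Union>i\<in>{1..N}. f i ` \<Lambda>) = \<Lambda>"

definition frel :: "nat \<Rightarrow> 'a set \<Rightarrow> (nat \<Rightarrow> 'a \<Rightarrow> 'a) \<Rightarrow> 'a \<Rightarrow> 'a \<Rightarrow> bool" where
  "frel N \<Lambda> f x y \<longleftrightarrow> (\<exists>J1 J2 z. set J1 \<subseteq> {1..N} \<and> set J2 \<subseteq> {1..N} \<and> z \<in> \<Lambda>
       \<and> fword f J1 z = x \<and> fword f J2 z = y)"

definition Aorb :: "nat \<Rightarrow> 'a set \<Rightarrow> (nat \<Rightarrow> 'a \<Rightarrow> 'a) \<Rightarrow> 'a \<Rightarrow> 'a set" where
  "Aorb N \<Lambda> f x = {y. frel N \<Lambda> f x y}"

definition cyclic :: "nat \<Rightarrow> 'a set \<Rightarrow> (nat \<Rightarrow> 'a \<Rightarrow> 'a) \<Rightarrow> bool" where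
  "cyclic N \<Lambda> f \<longleftrightarrow> (\<exists>x\<in>\<Lambda>. \<Lambda> = Aorb N \<Lambda> f x)"

definition isP :: "nat \<Rightarrow> 'a set \<Rightarrow> (nat \<Rightarrow> 'a \<Rightarrow> 'a) \<Rightarrow> nat list \<Rightarrow> bool" where
  "isP N \<Lambda> f J \<longleftrightarrow> cyclic N \<Lambda> f \<and>
     (\<exists>n :: nat \<Rightarrow> 'a. inj_on n {1..length J} \<and> n ` {1..length J} \<subseteq> \<Lambda> \<and>
        (\<forall>i\<in>{1..length J}. f (J ! (i - 1)) (n i) = n (if i = 1 then length J else i - 1)))"

definition nonperiodic :: "nat list \<Rightarrow> bool" where
  "nonperiodic J \<longleftrightarrow> \<not> (\<exists>w r. r \<ge> 2 \<and> J = concat (replicate r w))"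

text \<open>f^(sigma)_i (f_K(n)) = f_{sigma(i,K)}(n), K of length l-1, n in Lambda.
  sigma acts on words of length l; (i,K) is the word i # K.\<close>
definition fsig :: "nat \<Rightarrow> nat \<Rightarrow> 'a set \<Rightarrow> (nat \<Rightarrow> 'a \<Rightarrow> 'a) \<Rightarrow> (nat list \<Rightarrow> nat list)
                     \<Rightarrow> nat \<Rightarrow> 'a \<Rightarrow> 'a" where
  "fsig N l \<Lambda> f \<sigma> i x =
     (case (THE (K, n). K \<in> words N (l - 1) \<and> n \<in> \<Lambda> \<and> fword f K n = x) of
        (K, n) \<Rightarrow> fword f (\<sigma> (i # K)) n)"

text \<open>Transition function of the semi-Mealy machine: states q_K are identified with K;
  with sigma^{-1}(K,i) = (y_1,...,y_l), delta(q_K, a_i) = q_{(y_2,...,y_l)}.\<close>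
definition delta :: "nat \<Rightarrow> nat \<Rightarrow> (nat list \<Rightarrow> nat list) \<Rightarrow> nat list \<Rightarrow> nat \<Rightarrow> nat list" where
  "delta N l \<sigma> K i = tl (inv_into (words N l) \<sigma> (K @ [i]))"

definition deltas :: "nat \<Rightarrow> nat \<Rightarrow> (nat list \<Rightarrow> nat list) \<Rightarrow> nat list \<Rightarrow> nat list \<Rightarrow> nat list" where
  "deltas N l \<sigma> K w = foldl (delta N l \<sigma>) K w"

definition Jpow :: "nat list \<Rightarrow> nat \<Rightarrow> nat list" where
  "Jpow J n = concat (replicate n J)"

definition QJ :: "nat \<Rightarrow> nat \<Rightarrow> (nat list \<Rightarrow> nat list) \<Rightarrow> nat list \<Rightarrow> nat list set" where
  "QJ N l \<sigma> J = {K \<in> words N (l - 1). \<exists>n\<ge>1. deltas N l \<sigma> K (Jpow J n) = K}"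

definition qrel :: "nat \<Rightarrow> nat \<Rightarrow> (nat list \<Rightarrow> nat list) \<Rightarrow> nat list \<Rightarrow> nat list \<Rightarrow> nat list \<Rightarrow> bool" where
  "qrel N l \<sigma> J K K' \<longleftrightarrow> (\<exists>n\<ge>1. deltas N l \<sigma> K (Jpow J n) = K')"

definition qcls :: "nat \<Rightarrow> nat \<Rightarrow> (nat list \<Rightarrow> nat list) \<Rightarrow> nat list \<Rightarrow> nat list \<Rightarrow> nat list set" where
  "qcls N l \<sigma> J K = {K'. qrel N l \<sigma> J K K'}"

definition nzero :: "'a set \<Rightarrow> (nat \<Rightarrow> 'a \<Rightarrow> 'a) \<Rightarrow> nat list \<Rightarrow> 'a" where
  "nzero \<Lambda> f J = (THE x. x \<in> \<Lambda> \<and> fword f J x = x)"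

text \<open>m(p) = f_{(I_alpha, j_alpha)}(n_0), where alpha = r k, r = #[p],
  p_alpha = delta(p, a_{j_1} ... a_{j_{alpha-1}}) = q_{I_alpha} and j_alpha = j_k.\<close>
definition mpt :: "nat \<Rightarrow> nat \<Rightarrow> 'a set \<Rightarrow> (nat \<Rightarrow> 'a \<Rightarrow> 'a) \<Rightarrow> (nat list \<Rightarrow> nat list)
                    \<Rightarrow> nat list \<Rightarrow> nat list \<Rightarrow> 'a" where
  "mpt N l \<Lambda> f \<sigma> J p =
     (let r = card (qcls N l \<sigma> J p);
          Ialpha = deltas N l \<sigma> p (butlast (Jpow J r))
      in fword f (Ialpha @ [last J]) (nzero \<Lambda> f J))"

definition LamP :: "nat \<Rightarrow> nat \<Rightarrow> 'a set \<Rightarrow> (nat \<Rightarrow> 'a \<Rightarrow> 'a) \<Rightarrow> (nat list \<Rightarrow> nat list)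
                    \<Rightarrow> nat list \<Rightarrow> nat list \<Rightarrow> 'a set" where
  "LamP N l \<Lambda> f \<sigma> J p = Aorb N \<Lambda> (fsig N l \<Lambda> f \<sigma>) (mpt N l \<Lambda> f \<sigma> J p)"

end

theory Submission
  imports Defs
begin


definition PS :: "nat \<Rightarrow> 'a set \<Rightarrow> (nat \<Rightarrow> 'a \<Rightarrow> 'a) \<Rightarrow> ('a \<Rightarrow> 'a) \<Rightarrow> bool" where
  "PS N S g p \<longleftrightarrow> (\<forall>i\<in>{1..N}. \<forall>z\<in>S. g i z \<in> S \<and> p (g i z) = z)
     \<and> (\<forall>x\<in>S. p x \<in> S \<and> (\<exists>i\<in>{1..N}. g i (p x) = x))"

definition Erel :: "('a \<Rightarrow> 'a) \<Rightarrow> 'a \<Rightarrow> 'a \<Rightarrow> bool" where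
  "Erel p x y \<longleftrightarrow> (\<exists>a b. (p^^a) x = (p^^b) y)"

lemma fword_append: "fword f (A @ B) = fword f A \<circ> fword f B"
  by (induct A) auto

lemma PS_D1: "PS N S g p \<Longrightarrow> i \<in> {1..N} \<Longrightarrow> z \<in> S \<Longrightarrow> g i z \<in> S \<and> p (g i z) = z"
  unfolding PS_def by blast
lemma PS_D2: "PS N S g p \<Longrightarrow> x \<in> S \<Longrightarrow> p x \<in> S \<and> (\<exists>i\<in>{1..N}. g i (p x) = x)"
  unfolding PS_def by blast

lemma G1: "PS N S g p \<Longrightarrow> x \<in> S \<Longrightarrow> (p^^n) x \<in> S"
  by (induct n) (auto simp: PS_def)

lemma G2: "PS N S g p \<Longrightarrow> z \<in> S \<Longrightarrow> set W \<subseteq> {1..N} \<Longrightarrow>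
   fword g W z \<in> S \<and> (p^^length W) (fword g W z) = z"
proof (induct W)
  case Nil then show ?case by simp
next
  case (Cons a W)
  then have h: "fword g W z \<in> S" "(p^^length W) (fword g W z) = z" "a \<in> {1..N}" by auto
  then show ?case using Cons.prems(1) unfolding PS_def
    by (simp add: funpow_Suc_right del: funpow.simps)
qed

lemma G3: "PS N S g p \<Longrightarrow> x \<in> S \<Longrightarrow>
   \<exists>W. set W \<subseteq> {1..N} \<and> length W = n \<and> fword g W ((p^^n) x) = x"
proof (induct n arbitrary: x)
  case 0 then show ?case by (intro exI[of _ "[]"]) simp
next
  case (Suc n)
  then have px: "p x \<in> S" and "\<exists>i\<in>{1..N}. g i (p x) = x" by (auto simp: PS_def)
  then obtain i where i: "i \<in> {1..N}" "g i (p x) = x" by blast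
  obtain W where W: "set W \<subseteq> {1..N}" "length W = n" "fword g W ((p^^n) (p x)) = p x"
    using Suc.hyps[OF Suc.prems(1) px] by blast
  show ?case using i W
    by (intro exI[of _ "i # W"]) (simp add: funpow_Suc_right del: funpow.simps)
qed

lemma G4: assumes "PS N S g p" "x \<in> S"
  shows "frel N S g x y \<longleftrightarrow> y \<in> S \<and> Erel p x y"
proof
  assume "frel N S g x y"
  then obtain J1 J2 z where h: "set J1 \<subseteq> {1..N}" "set J2 \<subseteq> {1..N}" "z \<in> S"
    "fword g J1 z = x" "fword g J2 z = y" unfolding frel_def by blast
  then show "y \<in> S \<and> Erel p x y" using G2[OF assms(1) h(3) h(1)] G2[OF assms(1) h(3) h(2)]
    unfolding Erel_def by metis
next
  assume "y \<in> S \<and> Erel p x y"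
  then obtain a b where y: "y \<in> S" and e: "(p^^a) x = (p^^b) y" unfolding Erel_def by blast
  obtain W1 where W1: "set W1 \<subseteq> {1..N}" "fword g W1 ((p^^a) x) = x" using G3[OF assms] by blast
  obtain W2 where W2: "set W2 \<subseteq> {1..N}" "fword g W2 ((p^^b) y) = y" using G3[OF assms(1) y] by blast
  show "frel N S g x y" unfolding frel_def
    using W1 W2 e G1[OF assms] by metis
qed

lemma Erel_refl: "Erel p x x" unfolding Erel_def by blast
lemma Erel_sym: "Erel p x y \<Longrightarrow> Erel p y x" unfolding Erel_def by metis
lemma Erel_trans: assumes "Erel p x y" "Erel p y z" shows "Erel p x z"
proof -
  obtain a b where 1: "(p^^a) x = (p^^b) y" using assms(1) Erel_def by metis
  obtain c d where 2: "(p^^c) y = (p^^d) z" using assms(2) Erel_def by metis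
  have "(p^^(c+a)) x = (p^^(b+d)) z"
  proof -
    have "(p^^(c+a)) x = (p^^c) ((p^^a) x)" by (simp add: funpow_add)
    also have "\<dots> = (p^^c) ((p^^b) y)" using 1 by simp
    also have "\<dots> = (p^^b) ((p^^c) y)" by (metis comp_apply funpow_add add.commute)
    also have "\<dots> = (p^^(b+d)) z" using 2 by (simp add: funpow_add)
    finally show ?thesis .
  qed
  then show ?thesis unfolding Erel_def by blast
qed
lemma Erel_pow: "Erel p x ((p^^n) x)" unfolding Erel_def
  by (metis funpow_0)

lemma Aorb_eq: assumes "PS N S g p" "x \<in> S"
  shows "Aorb N S g x = {y \<in> S. Erel p x y}"
  using G4[OF assms] unfolding Aorb_def by blast



definition par :: "nat \<Rightarrow> 'a set \<Rightarrow> (nat \<Rightarrow> 'a \<Rightarrow> 'a) \<Rightarrow> 'a \<Rightarrow> 'a" where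
  "par N \<Lambda> f x = (SOME z. z \<in> \<Lambda> \<and> (\<exists>i\<in>{1..N}. f i z = x))"

lemma BFS_in: "BFS N \<Lambda> f \<Longrightarrow> i \<in> {1..N} \<Longrightarrow> z \<in> \<Lambda> \<Longrightarrow> f i z \<in> \<Lambda>"
  unfolding BFS_def by blast
lemma BFS_disj: "BFS N \<Lambda> f \<Longrightarrow> i \<in> {1..N} \<Longrightarrow> j \<in> {1..N} \<Longrightarrow> z \<in> \<Lambda> \<Longrightarrow> z' \<in> \<Lambda>
   \<Longrightarrow> f i z = f j z' \<Longrightarrow> i = j"
  unfolding BFS_def by (metis disjoint_iff image_eqI)
lemma BFS_inj: "BFS N \<Lambda> f \<Longrightarrow> i \<in> {1..N} \<Longrightarrow> z \<in> \<Lambda> \<Longrightarrow> z' \<in> \<Lambda>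
   \<Longrightarrow> f i z = f i z' \<Longrightarrow> z = z'"
  unfolding BFS_def inj_on_def by metis
lemma BFS_surj: "BFS N \<Lambda> f \<Longrightarrow> x \<in> \<Lambda> \<Longrightarrow> \<exists>z. z \<in> \<Lambda> \<and> (\<exists>i\<in>{1..N}. f i z = x)"
  unfolding BFS_def by (metis (no_types, lifting) UN_iff imageE)

lemma PS_f: assumes "BFS N \<Lambda> f" shows "PS N \<Lambda> f (par N \<Lambda> f)"
proof -
  have A: "f i z \<in> \<Lambda> \<and> par N \<Lambda> f (f i z) = z" if "i \<in> {1..N}" "z \<in> \<Lambda>" for i z
  proof -
    have uniq: "z' = z" if "z' \<in> \<Lambda>" "i' \<in> {1..N}" "f i' z' = f i z" for z' i'
      using BFS_disj[OF assms] BFS_inj[OF assms] that \<open>i \<in> {1..N}\<close> \<open>z \<in> \<Lambda>\<close> by metis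
    have "\<exists>z'. z' \<in> \<Lambda> \<and> (\<exists>i'\<in>{1..N}. f i' z' = f i z)" using that by blast
    from someI_ex[OF this] uniq show ?thesis using BFS_in[OF assms that] unfolding par_def by blast
  qed
  have B: "par N \<Lambda> f x \<in> \<Lambda> \<and> (\<exists>i\<in>{1..N}. f i (par N \<Lambda> f x) = x)" if "x \<in> \<Lambda>" for x
    using someI_ex[OF BFS_surj[OF assms that]] unfolding par_def .
  show ?thesis unfolding PS_def using A B by blast
qed

lemma words_Cons: "(a # w \<in> words N (Suc m)) \<longleftrightarrow> a \<in> {1..N} \<and> w \<in> words N m"
  unfolding words_def by auto

lemma UD: assumes "BFS N \<Lambda> f"
  shows "K \<in> words N L \<Longrightarrow> K' \<in> words N L \<Longrightarrow> m \<in> \<Lambda> \<Longrightarrow> m' \<in> \<Lambda> \<Longrightarrow>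
     fword f K m = fword f K' m' \<Longrightarrow> K = K' \<and> m = m'"
proof (induct K arbitrary: K' L)
  case Nil then show ?case by (simp add: words_def)
next
  case (Cons a K)
  obtain a' K1 L1 where K': "K' = a' # K1" and L: "L = Suc L1"
    using Cons.prems(1,2) unfolding words_def by (cases K') auto
  have w: "a \<in> {1..N}" "K \<in> words N L1" "a' \<in> {1..N}" "K1 \<in> words N L1"
    using Cons.prems(1,2) K' L words_Cons by auto
  have in1: "fword f K m \<in> \<Lambda>" and in2: "fword f K1 m' \<in> \<Lambda>"
    using G2[OF PS_f[OF assms]] w Cons.prems(3,4) unfolding words_def by auto
  have eq: "f a (fword f K m) = f a' (fword f K1 m')" using Cons.prems(5) K' by simp
  have "a = a'" using BFS_disj[OF assms] eq in1 in2 w by blast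
  moreover then have "fword f K m = fword f K1 m'" using BFS_inj[OF assms] eq in1 in2 w by blast
  ultimately show ?case using Cons.hyps[OF w(2) w(4) Cons.prems(3,4)] K' by simp
qed

lemma DE: assumes "BFS N \<Lambda> f" "x \<in> \<Lambda>"
  shows "\<exists>K\<in>words N L. \<exists>m\<in>\<Lambda>. fword f K m = x"
  using G3[OF PS_f[OF assms(1)] assms(2), of L] G1[OF PS_f[OF assms(1)] assms(2), of L]
  unfolding words_def by blast

lemma finite_words: "finite (words N m)"
  unfolding words_def using finite_lists_length_eq[of "{1..N}" m] by (simp add: conj_commute)

lemma nonper_lemma: assumes "nonperiodic J" "J \<noteq> []" "t < length J"
  "J @ drop t J = drop t J @ J" shows "t = 0"
proof -
  obtain m n zs where 1: "concat (replicate m zs) = J" and 2: "concat (replicate n zs) = drop t J"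
    using comm_append_are_replicate[OF assms(4)] by blast
  have "m < 2" using assms(1) 1 unfolding nonperiodic_def by (metis not_less)
  moreover have "m \<noteq> 0" using 1 assms(2) by auto
  ultimately have "m = 1" by simp
  then have J: "J = zs" using 1 by simp
  have "length (drop t J) = n * length J" using 2[symmetric] J by (simp add: length_concat sum_list_replicate)
  then have "length J - t = n * length J" by simp
  then show ?thesis using assms(3) by (cases n) auto
qed



definition psig :: "nat \<Rightarrow> nat \<Rightarrow> 'a set \<Rightarrow> (nat \<Rightarrow> 'a \<Rightarrow> 'a) \<Rightarrow> (nat list \<Rightarrow> nat list) \<Rightarrow> 'a \<Rightarrow> 'a" where
  "psig N l \<Lambda> f \<sigma> x = (SOME z. z \<in> \<Lambda> \<and> (\<exists>i\<in>{1..N}. fsig N l \<Lambda> f \<sigma> i z = x))"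

lemma deltas_append: "deltas N l \<sigma> K (u @ v) = deltas N l \<sigma> (deltas N l \<sigma> K u) v"
  unfolding deltas_def by simp

lemma Jpow_add: "Jpow J (a + b) = Jpow J a @ Jpow J b"
  unfolding Jpow_def by (simp add: replicate_add)

lemma Jpow_set: "set J \<subseteq> A \<Longrightarrow> set (Jpow J a) \<subseteq> A"
  unfolding Jpow_def by (induct a) auto

lemma Jpow_len: "length (Jpow J a) = a * length J"
  unfolding Jpow_def by (induct a) auto

lemma Jpow_fix: "fword f J x = x \<Longrightarrow> fword f (Jpow J a) x = x"
  unfolding Jpow_def by (induct a) (auto simp: fword_append)

lemma funpow_per: "(p^^k) x = x \<Longrightarrow> (p^^(k*c)) x = x"
proof (induct c)
  case 0 then show ?case by simp
next
  case (Suc c)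
  have "(p^^(k*Suc c)) x = (p^^k) ((p^^(k*c)) x)" by (simp add: funpow_add)
  then show ?case using Suc by simp
qed

lemma funpow_mod: "(p^^k) x = x \<Longrightarrow> (p^^s) x = (p^^(s mod k)) x"
proof -
  assume h: "(p^^k) x = x"
  have "s = s mod k + k * (s div k)" by simp
  then have "(p^^s) x = (p^^(s mod k)) ((p^^(k * (s div k))) x)" by (metis comp_apply funpow_add)
  then show ?thesis using funpow_per[OF h] by simp
qed

context
  fixes N l :: nat and \<sigma> :: "nat list \<Rightarrow> nat list" and f :: "nat \<Rightarrow> 'a \<Rightarrow> 'a" and \<Lambda> :: "'a set"
  assumes bfs: "BFS N \<Lambda> f" and l2: "l \<ge> 2" and bij: "bij_betw \<sigma> (words N l) (words N l)"
begin

abbreviation "fs \<equiv> fsig N l \<Lambda> f \<sigma>"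
abbreviation "ps \<equiv> psig N l \<Lambda> f \<sigma>"

lemma fword_in: "z \<in> \<Lambda> \<Longrightarrow> set W \<subseteq> {1..N} \<Longrightarrow> fword f W z \<in> \<Lambda>"
  using G2[OF PS_f[OF bfs]] by blast

lemma fsig_eq: assumes "K \<in> words N (l-1)" "m \<in> \<Lambda>"
  shows "fs i (fword f K m) = fword f (\<sigma> (i # K)) m"
proof -
  have "(THE (K', n). K' \<in> words N (l-1) \<and> n \<in> \<Lambda> \<and> fword f K' n = fword f K m) = (K, m)"
    by (rule the_equality) (use assms UD[OF bfs] in auto)
  then show ?thesis unfolding fsig_def by simp
qed

lemma inv_words: assumes "Y \<in> words N l"
  shows "hd (inv_into (words N l) \<sigma> Y) \<in> {1..N} \<and> tl (inv_into (words N l) \<sigma> Y) \<in> words N (l-1)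
     \<and> \<sigma> (hd (inv_into (words N l) \<sigma> Y) # tl (inv_into (words N l) \<sigma> Y)) = Y"
proof -
  define Y0 where "Y0 = inv_into (words N l) \<sigma> Y"
  have Y0w: "Y0 \<in> words N l" unfolding Y0_def
    using bij_betw_apply[OF bij_betw_inv_into[OF bij] assms(1)] .
  have sY0: "\<sigma> Y0 = Y" unfolding Y0_def using bij_betw_inv_into_right[OF bij assms(1)] .
  have ne: "Y0 \<noteq> []" using Y0w l2 unfolding words_def by auto
  then have Y0e: "Y0 = hd Y0 # tl Y0" by simp
  have s: "set Y0 \<subseteq> {1..N}" "length Y0 = l" using Y0w unfolding words_def by auto
  have "hd Y0 \<in> set Y0" using ne by (rule hd_in_set)
  then have h1: "hd Y0 \<in> {1..N}" using s by blast
  have "set (tl Y0) \<subseteq> set Y0" by (cases Y0) auto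
  then have h2: "tl Y0 \<in> words N (l-1)" using s unfolding words_def by auto
  show ?thesis using h1 h2 Y0e sY0 unfolding Y0_def by simp
qed

lemma inv_lemma: assumes "Y \<in> words N l" "m \<in> \<Lambda>"
  shows "fs (hd (inv_into (words N l) \<sigma> Y)) (fword f (tl (inv_into (words N l) \<sigma> Y)) m) = fword f Y m"
  using fsig_eq[OF conjunct1[OF conjunct2[OF inv_words[OF assms(1)]]] assms(2)]
    conjunct2[OF conjunct2[OF inv_words[OF assms(1)]]] by simp

lemma delta_words: assumes "K \<in> words N (l-1)" "i \<in> {1..N}" shows "delta N l \<sigma> K i \<in> words N (l-1)"
proof -
  have "K @ [i] \<in> words N l" using assms l2 unfolding words_def by auto
  then show ?thesis using inv_words[of "K @ [i]"] unfolding delta_def by blast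
qed

lemma deltas_words: "K \<in> words N (l-1) \<Longrightarrow> set w \<subseteq> {1..N} \<Longrightarrow> deltas N l \<sigma> K w \<in> words N (l-1)"
proof (induct w arbitrary: K)
  case Nil then show ?case by (simp add: deltas_def)
next
  case (Cons a w)
  have "delta N l \<sigma> K a \<in> words N (l-1)" using delta_words Cons.prems by auto
  then show ?case using Cons by (simp add: deltas_def)
qed

lemma fs_in: assumes "i \<in> {1..N}" "z \<in> \<Lambda>" shows "fs i z \<in> \<Lambda>"
proof -
  obtain K m where K: "K \<in> words N (l-1)" "m \<in> \<Lambda>" "fword f K m = z" using DE[OF bfs assms(2)] by blast
  have "i # K \<in> words N l" using K assms l2 unfolding words_def by auto
  then have "\<sigma> (i # K) \<in> words N l" using bij_betw_apply[OF bij] by blast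
  then show ?thesis using fsig_eq[OF K(1,2)] K fword_in unfolding words_def by auto
qed

lemma fs_uniq: assumes "i \<in> {1..N}" "z \<in> \<Lambda>" "i' \<in> {1..N}" "z' \<in> \<Lambda>" "fs i z = fs i' z'"
  shows "z = z'"
proof -
  obtain K m where K: "K \<in> words N (l-1)" "m \<in> \<Lambda>" "fword f K m = z" using DE[OF bfs assms(2)] by blast
  obtain K' m' where K': "K' \<in> words N (l-1)" "m' \<in> \<Lambda>" "fword f K' m' = z'" using DE[OF bfs assms(4)] by blast
  have w: "i # K \<in> words N l" "i' # K' \<in> words N l" using K K' assms l2 unfolding words_def by auto
  then have w2: "\<sigma> (i # K) \<in> words N l" "\<sigma> (i' # K') \<in> words N l" using bij_betw_apply[OF bij] by blast+
  have "fword f (\<sigma> (i # K)) m = fword f (\<sigma> (i' # K')) m'"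
    using assms(5) fsig_eq[OF K(1,2)] fsig_eq[OF K'(1,2)] K(3) K'(3) by simp
  then have "\<sigma> (i # K) = \<sigma> (i' # K')" "m = m'" using UD[OF bfs w2 K(2) K'(2)] by auto
  then have "i # K = i' # K'" using w bij unfolding bij_betw_def inj_on_def by blast
  then show ?thesis using K K' \<open>m = m'\<close> by simp
qed

lemma PS_sig: "PS N \<Lambda> fs ps"
proof -
  have A: "fs i z \<in> \<Lambda> \<and> ps (fs i z) = z" if "i \<in> {1..N}" "z \<in> \<Lambda>" for i z
  proof -
    have "\<exists>z'. z' \<in> \<Lambda> \<and> (\<exists>i'\<in>{1..N}. fs i' z' = fs i z)" using that by blast
    from someI_ex[OF this] have "ps (fs i z) \<in> \<Lambda> \<and> (\<exists>i'\<in>{1..N}. fs i' (ps (fs i z)) = fs i z)"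
      unfolding psig_def .
    then obtain i' where "ps (fs i z) \<in> \<Lambda>" "i' \<in> {1..N}" "fs i' (ps (fs i z)) = fs i z" by blast
    then have "ps (fs i z) = z" using fs_uniq[of i' "ps (fs i z)" i z] that by blast
    then show ?thesis using fs_in[OF that] by blast
  qed
  have B: "ps x \<in> \<Lambda> \<and> (\<exists>i\<in>{1..N}. fs i (ps x) = x)" if "x \<in> \<Lambda>" for x
  proof -
    obtain Y m where Y: "Y \<in> words N l" "m \<in> \<Lambda>" "fword f Y m = x" using DE[OF bfs \<open>x \<in> \<Lambda>\<close>, where L=l] by blast
    have "\<exists>z. z \<in> \<Lambda> \<and> (\<exists>i\<in>{1..N}. fs i z = x)"
      using inv_lemma[OF Y(1,2)] Y(3) fword_in[OF Y(2)] inv_words[OF Y(1)] unfolding words_def by blast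
    from someI_ex[OF this] show ?thesis unfolding psig_def .
  qed
  show ?thesis unfolding PS_def using A B by blast
qed

lemma skew: assumes "K \<in> words N (l-1)" "i \<in> {1..N}" "m \<in> \<Lambda>"
  shows "ps (fword f K (f i m)) = fword f (delta N l \<sigma> K i) m"
proof -
  have Y: "K @ [i] \<in> words N l" using assms l2 unfolding words_def by auto
  have "fword f K (f i m) = fword f (K @ [i]) m" by (simp add: fword_append)
  also have "\<dots> = fs (hd (inv_into (words N l) \<sigma> (K @ [i]))) (fword f (delta N l \<sigma> K i) m)"
    using inv_lemma[OF Y assms(3)] unfolding delta_def by simp
  finally have e: "fword f K (f i m) = fs (hd (inv_into (words N l) \<sigma> (K @ [i]))) (fword f (delta N l \<sigma> K i) m)" .
  have "fword f (delta N l \<sigma> K i) m \<in> \<Lambda>" using fword_in[OF assms(3)] delta_words[OF assms(1,2)]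
    unfolding words_def by blast
  moreover have "hd (inv_into (words N l) \<sigma> (K @ [i])) \<in> {1..N}" using inv_words[OF Y] by blast
  ultimately show ?thesis using PS_sig e unfolding PS_def by simp
qed

lemma skew_iter: "set w \<subseteq> {1..N} \<Longrightarrow> K \<in> words N (l-1) \<Longrightarrow> m \<in> \<Lambda> \<Longrightarrow>
   (ps^^length w) (fword f K (fword f w m)) = fword f (deltas N l \<sigma> K w) m"
proof (induct w arbitrary: K)
  case Nil then show ?case by (simp add: deltas_def)
next
  case (Cons a w)
  have a: "a \<in> {1..N}" and w: "set w \<subseteq> {1..N}" using Cons.prems by auto
  have "(ps^^length (a # w)) (fword f K (fword f (a # w) m)) = (ps^^length w) (ps (fword f K (f a (fword f w m))))"
    by (simp add: funpow_Suc_right del: funpow.simps)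
  also have "\<dots> = (ps^^length w) (fword f (delta N l \<sigma> K a) (fword f w m))"
    using skew[OF Cons.prems(2) a fword_in[OF Cons.prems(3) w]] by simp
  also have "\<dots> = fword f (deltas N l \<sigma> (delta N l \<sigma> K a) w) m"
    using Cons.hyps[OF w delta_words[OF Cons.prems(2) a] Cons.prems(3)] .
  finally show ?case by (simp add: deltas_def)
qed

end


context
  fixes N l k :: nat and \<sigma> :: "nat list \<Rightarrow> nat list" and J :: "nat list"
    and f :: "nat \<Rightarrow> 'a \<Rightarrow> 'a" and \<Lambda> :: "'a set"
  assumes bfs: "BFS N \<Lambda> f" and l2: "l \<ge> 2" and bij: "bij_betw \<sigma> (words N l) (words N l)"
    and k1: "k \<ge> 1" and Jw: "J \<in> words N k" and np: "nonperiodic J" and isp: "isP N \<Lambda> f J"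
begin

abbreviation "pr \<equiv> par N \<Lambda> f"
abbreviation "n0 \<equiv> nzero \<Lambda> f J"

lemma Jset: "set J \<subseteq> {1..N}" and Jlen: "length J = k" and Jne: "J \<noteq> []"
  using Jw k1 unfolding words_def by auto

lemma Erel_all: assumes "x \<in> \<Lambda>" "y \<in> \<Lambda>" shows "Erel pr x y"
proof -
  obtain x0 where x0: "x0 \<in> \<Lambda>" "\<Lambda> = Aorb N \<Lambda> f x0" using isp unfolding isP_def cyclic_def by blast
  then have L: "\<Lambda> = {y \<in> \<Lambda>. Erel pr x0 y}" using Aorb_eq[OF PS_f[OF bfs] x0(1)] by simp
  have "Erel pr x0 x" "Erel pr x0 y" using assms L by blast+
  then show ?thesis using Erel_sym Erel_trans by metis
qed

lemma comm_t: assumes "x \<in> \<Lambda>" "t < k" "fword f (J @ drop t J) x = fword f (drop t J @ J) x"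
  shows "t = 0"
proof -
  have w: "J @ drop t J \<in> words N (k + (k - t))" "drop t J @ J \<in> words N (k + (k - t))"
    using Jset Jlen unfolding words_def by (auto dest: in_set_dropD)
  have "J @ drop t J = drop t J @ J" using UD[OF bfs w assms(1) assms(1) assms(3)] by blast
  then show ?thesis using nonper_lemma[OF np Jne] assms(2) Jlen by simp
qed

lemma cyc_fix: "\<exists>c\<in>\<Lambda>. fword f J c = c"
proof -
  obtain n :: "nat \<Rightarrow> 'a" where n: "n ` {1..k} \<subseteq> \<Lambda>"
    "\<forall>i\<in>{1..k}. f (J ! (i - 1)) (n i) = n (if i = 1 then k else i - 1)"
    using isp Jlen unfolding isP_def by blast
  have "1 \<le> i \<longrightarrow> i \<le> k \<longrightarrow> fword f (take i J) (n i) = n k" for i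
  proof (induct i)
    case 0 then show ?case by simp
  next
    case (Suc i)
    show ?case
    proof (intro impI)
      assume a: "1 \<le> Suc i" "Suc i \<le> k"
      show "fword f (take (Suc i) J) (n (Suc i)) = n k"
      proof (cases "i = 0")
        case True
        have "take 1 J = [J ! 0]" using Jne by (cases J) auto
        have "(1::nat) \<in> {1..k}" using k1 by simp
        from bspec[OF n(2) this] have "f (J ! (1 - 1)) (n 1) = n (if (1::nat) = 1 then k else 1 - 1)" .
        then show ?thesis using \<open>take 1 J = [J ! 0]\<close> True by simp
      next
        case False
        have t: "take (Suc i) J = take i J @ [J ! i]" using a Jlen by (simp add: take_Suc_conv_app_nth)
        have "f (J ! i) (n (Suc i)) = n i" using n(2) a False by force
        then show ?thesis using t Suc False a by (simp add: fword_append)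
      qed
    qed
  qed
  then have "fword f J (n k) = n k" using k1 Jlen by (metis order_refl take_all)
  moreover have "n k \<in> \<Lambda>" using n(1) k1 by auto
  ultimately show ?thesis by blast
qed

lemma pr_k: "x \<in> \<Lambda> \<Longrightarrow> fword f J x = x \<Longrightarrow> (pr^^k) x = x"
  using G2[OF PS_f[OF bfs] _ Jset, of x] Jlen by simp

lemma shift: assumes "x \<in> \<Lambda>" "fword f J x = x" "t < k"
  shows "(pr^^t) x = fword f (drop t J) x" "fword f (drop t J) x \<in> \<Lambda>"
proof -
  have ds: "set (drop t J) \<subseteq> {1..N}" "set (take t J) \<subseteq> {1..N}" using Jset by (auto dest: in_set_dropD in_set_takeD)
  have m: "fword f (drop t J) x \<in> \<Lambda>" using G2[OF PS_f[OF bfs] assms(1) ds(1)] by blast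
  have "x = fword f (take t J) (fword f (drop t J) x)"
    using assms(2) by (metis append_take_drop_id comp_apply fword_append)
  then have "(pr^^length (take t J)) x = fword f (drop t J) x"
    using G2[OF PS_f[OF bfs] m ds(2)] by metis
  then show "(pr^^t) x = fword f (drop t J) x" using assms(3) Jlen by simp
  show "fword f (drop t J) x \<in> \<Lambda>" using m .
qed

lemma reach_fix: assumes "m \<in> \<Lambda>" "x \<in> \<Lambda>" "fword f J x = x"
  shows "\<exists>u. (pr^^u) m = x"
proof -
  obtain a b where e: "(pr^^a) m = (pr^^b) x" using Erel_all[OF assms(1,2)] unfolding Erel_def by blast
  have kb: "(pr^^(k*b)) x = x" using funpow_per[OF pr_k[OF assms(2,3)]] .
  have "b \<le> k * b" using k1 by simp
  then have "(pr^^((k*b - b) + a)) m = (pr^^(k*b - b)) ((pr^^b) x)" using e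
    by (metis comp_apply funpow_add)
  also have "\<dots> = (pr^^(k*b)) x" using \<open>b \<le> k*b\<close> by (metis comp_apply funpow_add le_add_diff_inverse2)
  finally show ?thesis using kb by metis
qed

lemma fix_uniq: assumes "x \<in> \<Lambda>" "fword f J x = x" "y \<in> \<Lambda>" "fword f J y = y" shows "x = y"
proof -
  obtain s where s: "(pr^^s) x = y" using reach_fix[OF assms(1,3,4)] by blast
  define t where "t = s mod k"
  have t: "t < k" using k1 unfolding t_def by simp
  have y: "y = fword f (drop t J) x" using s funpow_mod[OF pr_k[OF assms(1,2)], of s] shift(1)[OF assms(1,2) t]
    unfolding t_def by simp
  have "fword f (J @ drop t J) x = fword f J y" using y by (simp add: fword_append)
  also have "\<dots> = fword f (drop t J @ J) x" using assms(2,4) y by (simp add: fword_append)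
  finally have "t = 0" using comm_t[OF assms(1) t] by blast
  then show ?thesis using y assms(2) by simp
qed

lemma n0_prop: "n0 \<in> \<Lambda> \<and> fword f J n0 = n0"
proof -
  have "\<exists>!x. x \<in> \<Lambda> \<and> fword f J x = x" using cyc_fix fix_uniq by blast
  from theI'[OF this] show ?thesis unfolding nzero_def .
qed

lemma n0_in: "n0 \<in> \<Lambda>" and n0_fix: "fword f J n0 = n0" using n0_prop by auto

lemma drop_fix: assumes "t < k" "fword f (drop t J) n0 = n0" shows "t = 0"
proof -
  have "fword f (J @ drop t J) n0 = n0" using assms n0_fix by (simp add: fword_append)
  moreover have "fword f (drop t J @ J) n0 = n0" using assms n0_fix by (simp add: fword_append)
  ultimately show ?thesis using comm_t[OF n0_in assms(1)] by simp
qed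


abbreviation "fsJ \<equiv> fsig N l \<Lambda> f \<sigma>"
abbreviation "psJ \<equiv> psig N l \<Lambda> f \<sigma>"

lemma deltas_per: "deltas N l \<sigma> p (Jpow J n) = p \<Longrightarrow> deltas N l \<sigma> p (Jpow J (n*c)) = p"
proof (induct c)
  case 0 then show ?case by (simp add: Jpow_def deltas_def)
next
  case (Suc c)
  have "Jpow J (n * Suc c) = Jpow J n @ Jpow J (n*c)" by (simp add: Jpow_add[symmetric])
  then show ?case using Suc by (simp add: deltas_append)
qed

lemma skewJ: assumes "K \<in> words N (l-1)"
  shows "(psJ^^(a*k)) (fword f K n0) = fword f (deltas N l \<sigma> K (Jpow J a)) n0"
proof -
  have "(psJ^^length (Jpow J a)) (fword f K (fword f (Jpow J a) n0)) = fword f (deltas N l \<sigma> K (Jpow J a)) n0"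
    using skew_iter[OF bfs l2 bij Jpow_set[OF Jset] assms n0_in] .
  then show ?thesis using Jpow_fix[OF n0_fix] Jpow_len Jlen by simp
qed

lemma Jpow_last: assumes "r \<ge> 1" shows "last (Jpow J r) = last J"
proof -
  have "Jpow J r = Jpow J (r - 1) @ Jpow J 1" using assms Jpow_add[of J "r-1" 1] by simp
  then show ?thesis using Jne by (simp add: Jpow_def)
qed

lemma mpt_lemma: assumes p: "p \<in> QJ N l \<sigma> J"
  shows "mpt N l \<Lambda> f \<sigma> J p \<in> \<Lambda> \<and> Erel psJ (mpt N l \<Lambda> f \<sigma> J p) (fword f p n0)"
proof -
  have pw: "p \<in> words N (l-1)" and "\<exists>n\<ge>1. deltas N l \<sigma> p (Jpow J n) = p" using p unfolding QJ_def by auto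
  then have pc: "p \<in> qcls N l \<sigma> J p" unfolding qcls_def qrel_def by blast
  have "qcls N l \<sigma> J p \<subseteq> words N (l-1)" unfolding qcls_def qrel_def
    using deltas_words[OF bfs l2 bij pw Jpow_set[OF Jset]] by blast
  then have "finite (qcls N l \<sigma> J p)" using finite_words finite_subset by blast
  then have "0 < card (qcls N l \<sigma> J p)" using pc by (auto simp: card_gt_0_iff)
  then have r1: "card (qcls N l \<sigma> J p) \<ge> 1" by simp
  define r where "r = card (qcls N l \<sigma> J p)"
  define X where "X = Jpow J r"
  define I where "I = deltas N l \<sigma> p (butlast X)"
  have Xne: "X \<noteq> []" using r1 Jne unfolding X_def r_def Jpow_def by (cases r) auto
  have lX: "last X = last J" using Jpow_last r1 unfolding X_def r_def by simp
  have Xs: "set X \<subseteq> {1..N}" using Jpow_set[OF Jset] unfolding X_def .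
  then have bs: "set (butlast X) \<subseteq> {1..N}" by (meson in_set_butlastD subset_iff)
  have Iw: "I \<in> words N (l-1)" unfolding I_def using deltas_words[OF bfs l2 bij pw bs] .
  have lJ: "last J \<in> {1..N}" using Jset Jne last_in_set by blast
  have mp: "mpt N l \<Lambda> f \<sigma> J p = fword f I (f (last J) n0)"
    unfolding mpt_def Let_def I_def X_def r_def by (simp add: fword_append)
  have "psJ (mpt N l \<Lambda> f \<sigma> J p) = fword f (delta N l \<sigma> I (last J)) n0"
    using mp skew[OF bfs l2 bij Iw lJ n0_in] by simp
  also have "delta N l \<sigma> I (last J) = deltas N l \<sigma> p (butlast X @ [last X])"
    unfolding I_def using lX by (simp add: deltas_append deltas_def)
  also have "\<dots> = deltas N l \<sigma> p X" using Xne by simp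
  finally have e1: "(psJ^^1) (mpt N l \<Lambda> f \<sigma> J p) = fword f (deltas N l \<sigma> p X) n0" by simp
  have e2: "(psJ^^(r*k)) (fword f p n0) = fword f (deltas N l \<sigma> p X) n0"
    using skewJ[OF pw] unfolding X_def .
  have "Erel psJ (mpt N l \<Lambda> f \<sigma> J p) (fword f p n0)" unfolding Erel_def using e1 e2 by metis
  moreover have "mpt N l \<Lambda> f \<sigma> J p \<in> \<Lambda>" using mp fword_in[OF bfs l2 bij] BFS_in[OF bfs lJ n0_in] Iw
    unfolding words_def by auto
  ultimately show ?thesis by blast
qed

lemma qrel_Erel: assumes "p \<in> QJ N l \<sigma> J" "qrel N l \<sigma> J p p'"
  shows "Erel psJ (fword f p n0) (fword f p' n0)"
proof -
  have pw: "p \<in> words N (l-1)" using assms(1) unfolding QJ_def by auto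
  obtain n where "deltas N l \<sigma> p (Jpow J n) = p'" using assms(2) unfolding qrel_def by blast
  then have "(psJ^^(n*k)) (fword f p n0) = fword f p' n0" using skewJ[OF pw] by simp
  then show ?thesis unfolding Erel_def by (metis funpow_0)
qed

lemma Erel_qrel: assumes p: "p \<in> QJ N l \<sigma> J" and p': "p' \<in> QJ N l \<sigma> J"
    and E: "Erel psJ (fword f p n0) (fword f p' n0)"
  shows "qrel N l \<sigma> J p p'"
proof -
  have pw: "p \<in> words N (l-1)" using p unfolding QJ_def by auto
  have pw': "p' \<in> words N (l-1)" and "\<exists>n\<ge>1. deltas N l \<sigma> p' (Jpow J n) = p'" using p' unfolding QJ_def by auto
  then obtain n' where n': "n' \<ge> 1" "deltas N l \<sigma> p' (Jpow J n') = p'" by blast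
  obtain a b where e: "(psJ^^a) (fword f p n0) = (psJ^^b) (fword f p' n0)" using E unfolding Erel_def by blast
  define s where "s = b + (k*a - a)"
  define t where "t = s mod k"
  define q where "q = s div k"
  have t: "t < k" using k1 unfolding t_def by simp
  have sq: "s = t + q * k" unfolding t_def q_def by simp
  define K1 where "K1 = deltas N l \<sigma> p (Jpow J a)"
  define K2 where "K2 = deltas N l \<sigma> p' (Jpow J q)"
  have K1w: "K1 \<in> words N (l-1)" unfolding K1_def using deltas_words[OF bfs l2 bij pw Jpow_set[OF Jset]] .
  have K2w: "K2 \<in> words N (l-1)" unfolding K2_def using deltas_words[OF bfs l2 bij pw' Jpow_set[OF Jset]] .
  have "a \<le> k*a" using k1 by simp
  have ak: "a*k = (k*a - a) + a" using \<open>a \<le> k*a\<close> by (simp add: mult.commute)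
  have "(psJ^^(a*k)) (fword f p n0) = (psJ^^((k*a - a) + a)) (fword f p n0)" by (simp only: ak)
  also have "\<dots> = (psJ^^(k*a - a)) ((psJ^^a) (fword f p n0))" by (simp only: funpow_add comp_apply)
  also have "\<dots> = (psJ^^(k*a - a)) ((psJ^^b) (fword f p' n0))" by (simp only: e)
  also have "\<dots> = (psJ^^((k*a - a) + b)) (fword f p' n0)" by (simp only: funpow_add comp_apply)
  also have "\<dots> = (psJ^^s) (fword f p' n0)" unfolding s_def by (simp add: add.commute)
  also have "\<dots> = (psJ^^t) ((psJ^^(q*k)) (fword f p' n0))" unfolding sq by (simp add: funpow_add)
  also have "\<dots> = (psJ^^t) (fword f K2 n0)" using skewJ[OF pw'] unfolding K2_def by simp
  finally have e2: "fword f K1 n0 = (psJ^^t) (fword f K2 n0)" using skewJ[OF pw] unfolding K1_def by simp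
  define mt where "mt = fword f (drop t J) n0"
  have mt: "mt \<in> \<Lambda>" using shift(2)[OF n0_in n0_fix t] unfolding mt_def .
  have n0e: "n0 = fword f (take t J) mt" unfolding mt_def using n0_fix
    by (metis append_take_drop_id comp_apply fword_append)
  have ts: "set (take t J) \<subseteq> {1..N}" using Jset by (auto dest: in_set_takeD)
  have "(psJ^^t) (fword f K2 n0) = fword f (deltas N l \<sigma> K2 (take t J)) mt"
    using skew_iter[OF bfs l2 bij ts K2w mt] n0e t Jlen by simp
  then have "fword f K1 n0 = fword f (deltas N l \<sigma> K2 (take t J)) mt" using e2 by simp
  then have "n0 = mt" using UD[OF bfs K1w deltas_words[OF bfs l2 bij K2w ts] n0_in mt] by blast
  then have "t = 0" using drop_fix[OF t] unfolding mt_def by simp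
  then have "fword f K1 n0 = fword f K2 n0" using e2 by simp
  then have K12: "K1 = K2" using UD[OF bfs K1w K2w n0_in n0_in] by blast
  define M where "M = n' * (q + 1)"
  have "1 * (q + 1) \<le> n' * (q + 1)" using n'(1) by (rule mult_le_mono1)
  then have "q + 1 \<le> M" unfolding M_def by simp
  have calc: "p' = deltas N l \<sigma> p' (Jpow J M)" using deltas_per[OF n'(2), of "q + 1"] unfolding M_def by (simp only:)
  also have "Jpow J M = Jpow J q @ Jpow J (M - q)" using \<open>q + 1 \<le> M\<close> Jpow_add[of J q "M - q"] by simp
  also have "deltas N l \<sigma> p' (Jpow J q @ Jpow J (M - q)) = deltas N l \<sigma> K1 (Jpow J (M - q))"
    using K12 unfolding K2_def by (simp add: deltas_append)
  also have "\<dots> = deltas N l \<sigma> p (Jpow J (a + (M - q)))" unfolding K1_def by (simp add: Jpow_add deltas_append)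
  finally have "p' = deltas N l \<sigma> p (Jpow J (a + (M - q)))" .
  moreover have "a + (M - q) \<ge> 1" using \<open>q + 1 \<le> M\<close> by simp
  ultimately show ?thesis unfolding qrel_def by metis
qed


end


context
  fixes N l k :: nat and \<sigma> :: "nat list \<Rightarrow> nat list" and J :: "nat list"
    and f :: "nat \<Rightarrow> 'a \<Rightarrow> 'a" and \<Lambda> :: "'a set"
  assumes bfs: "BFS N \<Lambda> f" and l2: "l \<ge> 2" and bij: "bij_betw \<sigma> (words N l) (words N l)"
    and k1: "k \<ge> 1" and Jw: "J \<in> words N k" and np: "nonperiodic J" and isp: "isP N \<Lambda> f J"
begin

abbreviation "ps3 \<equiv> psig N l \<Lambda> f \<sigma>"
abbreviation "fs3 \<equiv> fsig N l \<Lambda> f \<sigma>"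
abbreviation "pr3 \<equiv> par N \<Lambda> f"
abbreviation "n3 \<equiv> nzero \<Lambda> f J"

lemmas e_reach_fix = reach_fix[OF bfs l2 bij k1 Jw np isp]
lemmas e_n0_in = n0_in[OF bfs l2 bij k1 Jw np isp]
lemmas e_n0_fix = n0_fix[OF bfs l2 bij k1 Jw np isp]
lemmas e_skewJ = skewJ[OF bfs l2 bij k1 Jw np isp]
lemmas e_Jset = Jset[OF bfs l2 bij k1 Jw np isp]
lemmas e_mpt_lemma = mpt_lemma[OF bfs l2 bij k1 Jw np isp]
lemmas e_qrel_Erel = qrel_Erel[OF bfs l2 bij k1 Jw np isp]
lemmas e_Erel_qrel = Erel_qrel[OF bfs l2 bij k1 Jw np isp]

lemma reachQ: assumes x: "x \<in> \<Lambda>"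
  shows "\<exists>p\<in>QJ N l \<sigma> J. \<exists>s. (ps3^^s) x = fword f p n3"
proof -
  obtain K m where K: "K \<in> words N (l-1)" "m \<in> \<Lambda>" "fword f K m = x" using DE[OF bfs x, where L="l-1"] by blast
  obtain u where u: "(pr3^^u) m = n3" using e_reach_fix[OF K(2) e_n0_in e_n0_fix] by blast
  obtain W where W: "set W \<subseteq> {1..N}" "fword f W ((pr3^^u) m) = m" using G3[OF PS_f[OF bfs] K(2)] by blast
  have Wm: "fword f W n3 = m" using W u by simp
  define K1 where "K1 = deltas N l \<sigma> K W"
  have K1w: "K1 \<in> words N (l-1)" unfolding K1_def using deltas_words[OF bfs l2 bij K(1) W(1)] .
  have s1: "(ps3^^length W) x = fword f K1 n3"
    using skew_iter[OF bfs l2 bij W(1) K(1) e_n0_in] Wm K(3) unfolding K1_def by simp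
  define h where "h a = deltas N l \<sigma> K1 (Jpow J a)" for a
  have hw: "h a \<in> words N (l-1)" for a unfolding h_def using deltas_words[OF bfs l2 bij K1w Jpow_set[OF e_Jset]] .
  have "range h \<subseteq> words N (l-1)" using hw by blast
  then have "finite (range h)" using finite_words finite_subset by blast
  then have "\<not> inj h" using finite_imageD[of h UNIV] infinite_UNIV_nat by blast
  then obtain a b where ab: "a \<noteq> b" "h a = h b" unfolding inj_def by blast
  obtain a' b' where ab': "a' < b'" "h a' = h b'"
  proof (cases "a < b")
    case True then show ?thesis using that ab by blast
  next
    case False then have "b < a" using ab(1) by simp
    then show ?thesis using that ab by metis
  qed
  define p where "p = h a'"
  have "deltas N l \<sigma> p (Jpow J (b' - a')) = deltas N l \<sigma> K1 (Jpow J (a' + (b' - a')))"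
    unfolding p_def h_def by (simp add: Jpow_add deltas_append)
  also have "\<dots> = p" using ab' unfolding p_def h_def by simp
  finally have pe: "deltas N l \<sigma> p (Jpow J (b' - a')) = p" .
  have "b' - a' \<ge> 1" using ab'(1) by simp
  then have "p \<in> QJ N l \<sigma> J" unfolding QJ_def using hw[of a'] pe unfolding p_def by blast
  moreover have "(ps3^^(a'*k + length W)) x = fword f p n3"
    using s1 e_skewJ[OF K1w, of a'] unfolding p_def h_def by (simp add: funpow_add)
  ultimately show ?thesis by blast
qed

lemma partA: assumes sub: "\<Lambda>0 \<subseteq> \<Lambda>" and b0: "BFS N \<Lambda>0 fs3" and cy: "cyclic N \<Lambda>0 fs3"
  shows "\<exists>p\<in>QJ N l \<sigma> J. \<Lambda>0 = LamP N l \<Lambda> f \<sigma> J p"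
proof -
  have PSL: "PS N \<Lambda> fs3 ps3" using PS_sig[OF bfs l2 bij] .
  have PS0: "PS N \<Lambda>0 fs3 ps3"
  proof -
    have "fs3 i z \<in> \<Lambda>0 \<and> ps3 (fs3 i z) = z" if "i \<in> {1..N}" "z \<in> \<Lambda>0" for i z
    proof -
      have "z \<in> \<Lambda>" using that sub by blast
      then show ?thesis using BFS_in[OF b0 that] PS_D1[OF PSL that(1)] by blast
    qed
    moreover have "ps3 x \<in> \<Lambda>0 \<and> (\<exists>i\<in>{1..N}. fs3 i (ps3 x) = x)" if "x \<in> \<Lambda>0" for x
    proof -
      note xin = that
      obtain z i where zi: "z \<in> \<Lambda>0" "i \<in> {1..N}" "fs3 i z = x" using BFS_surj[OF b0 xin] by blast
      have "z \<in> \<Lambda>" using zi sub by blast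
      then have "ps3 (fs3 i z) = z" using PS_D1[OF PSL zi(2)] by blast
      then have "ps3 x = z" using zi(3) by simp
      then show ?thesis using zi by metis
    qed
    ultimately show ?thesis unfolding PS_def by blast
  qed
  obtain x0 where x0: "x0 \<in> \<Lambda>0" "\<Lambda>0 = Aorb N \<Lambda>0 fs3 x0" using cy unfolding cyclic_def by (elim bexE) (rule that; assumption)
  have L0: "\<Lambda>0 = {y \<in> \<Lambda>0. Erel ps3 x0 y}" using trans[OF x0(2) Aorb_eq[OF PS0 x0(1)]] .
  have x0L: "x0 \<in> \<Lambda>" using x0(1) sub by blast
  obtain p s where p: "p \<in> QJ N l \<sigma> J" "(ps3^^s) x0 = fword f p n3" using reachQ[OF x0L] by blast
  have e1: "Erel ps3 x0 (fword f p n3)" using Erel_pow p(2) by metis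
  have mp: "mpt N l \<Lambda> f \<sigma> J p \<in> \<Lambda>" "Erel ps3 (mpt N l \<Lambda> f \<sigma> J p) (fword f p n3)" using e_mpt_lemma[OF p(1)] by auto
  have e2: "Erel ps3 (mpt N l \<Lambda> f \<sigma> J p) x0" using Erel_trans[OF mp(2) Erel_sym[OF e1]] .
  have LP: "LamP N l \<Lambda> f \<sigma> J p = {y \<in> \<Lambda>. Erel ps3 (mpt N l \<Lambda> f \<sigma> J p) y}"
    unfolding LamP_def using Aorb_eq[OF PSL mp(1)] .
  have "\<Lambda>0 = LamP N l \<Lambda> f \<sigma> J p"
  proof
    show "\<Lambda>0 \<subseteq> LamP N l \<Lambda> f \<sigma> J p"
    proof
      fix y assume "y \<in> \<Lambda>0"
      moreover have "\<Lambda>0 \<subseteq> {y \<in> \<Lambda>0. Erel ps3 x0 y}" using L0 by (rule equalityD1)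
      ultimately have "y \<in> \<Lambda>" "Erel ps3 x0 y" using sub by blast+
      then have "Erel ps3 (mpt N l \<Lambda> f \<sigma> J p) y" using Erel_trans[OF e2] by blast
      then show "y \<in> LamP N l \<Lambda> f \<sigma> J p" unfolding LP using \<open>y \<in> \<Lambda>\<close> by simp
    qed
  next
    show "LamP N l \<Lambda> f \<sigma> J p \<subseteq> \<Lambda>0"
    proof
      fix y assume "y \<in> LamP N l \<Lambda> f \<sigma> J p"
      then have "y \<in> {y \<in> \<Lambda>. Erel ps3 (mpt N l \<Lambda> f \<sigma> J p) y}" unfolding LP .
      then have y: "y \<in> \<Lambda>" "Erel ps3 (mpt N l \<Lambda> f \<sigma> J p) y" by simp_all
      then have ey: "Erel ps3 x0 y" using Erel_trans[OF Erel_sym[OF e2] y(2)] by blast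
      then obtain a b where ab: "(ps3^^a) x0 = (ps3^^b) y" unfolding Erel_def by blast
      have z0: "(ps3^^a) x0 \<in> \<Lambda>0" using G1[OF PS0 x0(1)] .
      obtain W where W: "set W \<subseteq> {1..N}" "fword fs3 W ((ps3^^b) y) = y" using G3[OF PSL y(1)] by blast
      have "fword fs3 W ((ps3^^a) x0) \<in> \<Lambda>0" using G2[OF PS0 z0 W(1)] by blast
      moreover have "fword fs3 W ((ps3^^a) x0) = y" using W(2) ab by simp
      ultimately have "y \<in> \<Lambda>0" by simp
      then show "y \<in> \<Lambda>0" .
    qed
  qed
  then show ?thesis using p(1) by blast
qed

lemma partB: assumes p: "p \<in> QJ N l \<sigma> J" and p': "p' \<in> QJ N l \<sigma> J"
  shows "qrel N l \<sigma> J p p' \<longleftrightarrow> LamP N l \<Lambda> f \<sigma> J p = LamP N l \<Lambda> f \<sigma> J p'"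
proof -
  have PSL: "PS N \<Lambda> fs3 ps3" using PS_sig[OF bfs l2 bij] .
  have m: "mpt N l \<Lambda> f \<sigma> J p \<in> \<Lambda>" "Erel ps3 (mpt N l \<Lambda> f \<sigma> J p) (fword f p n3)" using e_mpt_lemma[OF p] by auto
  have m': "mpt N l \<Lambda> f \<sigma> J p' \<in> \<Lambda>" "Erel ps3 (mpt N l \<Lambda> f \<sigma> J p') (fword f p' n3)" using e_mpt_lemma[OF p'] by auto
  have LP: "LamP N l \<Lambda> f \<sigma> J p = {y \<in> \<Lambda>. Erel ps3 (mpt N l \<Lambda> f \<sigma> J p) y}"
    unfolding LamP_def using Aorb_eq[OF PSL m(1)] .
  have LP': "LamP N l \<Lambda> f \<sigma> J p' = {y \<in> \<Lambda>. Erel ps3 (mpt N l \<Lambda> f \<sigma> J p') y}"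
    unfolding LamP_def using Aorb_eq[OF PSL m'(1)] .
  show ?thesis
  proof
    assume "qrel N l \<sigma> J p p'"
    then have "Erel ps3 (fword f p n3) (fword f p' n3)" using e_qrel_Erel[OF p] by blast
    then have E: "Erel ps3 (mpt N l \<Lambda> f \<sigma> J p) (mpt N l \<Lambda> f \<sigma> J p')"
      using Erel_trans[OF Erel_trans[OF m(2)] Erel_sym[OF m'(2)]] by blast
    have "Erel ps3 (mpt N l \<Lambda> f \<sigma> J p) y \<longleftrightarrow> Erel ps3 (mpt N l \<Lambda> f \<sigma> J p') y" for y
      using Erel_trans[OF Erel_sym[OF E], of y] Erel_trans[OF E, of y] by blast
    then show "LamP N l \<Lambda> f \<sigma> J p = LamP N l \<Lambda> f \<sigma> J p'"
      unfolding LP LP' by blast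
  next
    assume "LamP N l \<Lambda> f \<sigma> J p = LamP N l \<Lambda> f \<sigma> J p'"
    moreover have "mpt N l \<Lambda> f \<sigma> J p' \<in> LamP N l \<Lambda> f \<sigma> J p'" unfolding LP' using m'(1) Erel_refl[of ps3] by blast
    ultimately have "Erel ps3 (mpt N l \<Lambda> f \<sigma> J p) (mpt N l \<Lambda> f \<sigma> J p')" unfolding LP by blast
    then have "Erel ps3 (fword f p n3) (fword f p' n3)"
      using Erel_trans[OF Erel_trans[OF Erel_sym[OF m(2)]] m'(2)] by blast
    then show "qrel N l \<sigma> J p p'" using e_Erel_qrel[OF p p'] by blast
  qed
qed

end

theorem lemma3p1:
  fixes N l k :: nat and \<sigma> :: "nat list \<Rightarrow> nat list" and J :: "nat list"
    and f :: "nat \<Rightarrow> 'a \<Rightarrow> 'a" and \<Lambda> :: "'a set"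
  assumes "N \<ge> 2" and "l \<ge> 2"
    and "bij_betw \<sigma> (words N l) (words N l)"
    and "k \<ge> 1" and "J \<in> words N k" and "nonperiodic J"
    and "BFS N \<Lambda> f" and "isP N \<Lambda> f J"
  shows "(\<forall>\<Lambda>0 T. \<Lambda>0 \<subseteq> \<Lambda> \<and> BFS N \<Lambda>0 (fsig N l \<Lambda> f \<sigma>)
              \<and> T \<noteq> [] \<and> set T \<subseteq> {1..N} \<and> isP N \<Lambda>0 (fsig N l \<Lambda> f \<sigma>) T
            \<longrightarrow> (\<exists>p\<in>QJ N l \<sigma> J. \<Lambda>0 = LamP N l \<Lambda> f \<sigma> J p))
       \<and> (\<forall>p\<in>QJ N l \<sigma> J. \<forall>p'\<in>QJ N l \<sigma> J.
            qrel N l \<sigma> J p p' \<longleftrightarrow> LamP N l \<Lambda> f \<sigma> J p = LamP N l \<Lambda> f \<sigma> J p')"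
proof (intro conjI allI impI ballI)
  fix \<Lambda>0 :: "'a set" and T :: "nat list"
  assume h: "\<Lambda>0 \<subseteq> \<Lambda> \<and> BFS N \<Lambda>0 (fsig N l \<Lambda> f \<sigma>)
              \<and> T \<noteq> [] \<and> set T \<subseteq> {1..N} \<and> isP N \<Lambda>0 (fsig N l \<Lambda> f \<sigma>) T"
  then have "cyclic N \<Lambda>0 (fsig N l \<Lambda> f \<sigma>)" unfolding isP_def by blast
  then show "\<exists>p\<in>QJ N l \<sigma> J. \<Lambda>0 = LamP N l \<Lambda> f \<sigma> J p"
    using partA[OF assms(7,2,3,4,5,6,8)] h by blast
next
  fix p p' assume "p \<in> QJ N l \<sigma> J" "p' \<in> QJ N l \<sigma> J"
  then show "qrel N l \<sigma> J p p' \<longleftrightarrow> LamP N l \<Lambda> f \<sigma> J p = LamP N l \<Lambda> f \<sigma> J p'"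
    using partB[OF assms(7,2,3,4,5,6,8)] by blast
qed

end
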